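(* Let $n \ge 2$ be an integer, let $1 \le \underline{x}_i < \bar{x}_i$ for $i \in \{1,2\}$, and let $\varepsilon \ge 2^{-2^{n-1}}$. Then for every $(x_1,x_2) \in [\underline{x}_1,\bar{x}_1] \times [\underline{x}_2,\bar{x}_2]$, the set of $\varepsilon$-feasible follower's solutions of the lower-level problem $$\max_{y \in \mathbb{R}^{n+2}} \; y_1 - y_n\,(x_1 + x_2 - y_{n+1} - y_{n+2})$$ subject to $y_1 + y_n = \tfrac12$, $y_i^2 \le y_{i+1}$ for $i \in \{1,\dots,n-1\}$, $y_i \ge 0$ for $i \in \{1,\dots,n\}$, $y_{n+1} \in [0,x_1]$, $y_{n+2} \in [-x_2,x_2]$, is not a singleton.
   Context: For $\varepsilon>0$, a point is $\varepsilon$-feasible for this lower-level problem if it satisfies all linear constraints ($y_1+y_n=\tfrac12$, $y_i\ge0$ for $i\le n$, the bounds on $y_{n+1},y_{n+2}$) exactly and satisfies $y_i^2 - y_{i+1} \le \varepsilon$ for all $i \in \{1,\dots,n-1\}$. An $\varepsilon$-feasible follower's solution (for given $x$) is an $\varepsilon$-feasible point that maximizes the lower-level objective over all $\varepsilon$-feasible points. *)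

theory Defs
  imports Complex_Main
begin

text \<open>Points y of R^(n+2) are represented as functions nat => real with
  support in {1..n+2} (components y 1, ..., y (n+2)).\<close>

definition ll_obj :: "nat \<Rightarrow> real \<Rightarrow> real \<Rightarrow> (nat \<Rightarrow> real) \<Rightarrow> real" where
  "ll_obj n x1 x2 y = y 1 - y n * (x1 + x2 - y (n+1) - y (n+2))"

definition eps_feasible :: "nat \<Rightarrow> real \<Rightarrow> real \<Rightarrow> real \<Rightarrow> (nat \<Rightarrow> real) \<Rightarrow> bool" where
  "eps_feasible n eps x1 x2 y \<longleftrightarrow>
     (\<forall>i. i \<notin> {1..n+2} \<longrightarrow> y i = 0) \<and>
     y 1 + y n = 1/2 \<and>
     (\<forall>i\<in>{1..n}. y i \<ge> 0) \<and>
     0 \<le> y (n+1) \<and> y (n+1) \<le> x1 \<and>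
     -x2 \<le> y (n+2) \<and> y (n+2) \<le> x2 \<and>
     (\<forall>i\<in>{1..n-1}. (y i)^2 - y (i+1) \<le> eps)"

definition eps_follower_solutions :: "nat \<Rightarrow> real \<Rightarrow> real \<Rightarrow> real \<Rightarrow> (nat \<Rightarrow> real) set" where
  "eps_follower_solutions n eps x1 x2 =
     {y. eps_feasible n eps x1 x2 y \<and>
         (\<forall>z. eps_feasible n eps x1 x2 z \<longrightarrow> ll_obj n x1 x2 z \<le> ll_obj n x1 x2 y)}"

end

theory Submission
  imports Defs
begin

lemma zsq: "(1/2^(2^(i-1)) :: real)^2 = 1/2^(2^(Suc i - 1))" if "i \<ge> 1" for i :: nat
proof -
  have "(2::nat)^(Suc i - 1) = 2^(i-1) * 2" using that
    by (metis Suc_diff_le diff_Suc_1 power_Suc2)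
  then show ?thesis by (simp add: power_divide power_mult[symmetric])
qed

theorem mainTheorem5:
  fixes n :: nat and xlo1 xhi1 xlo2 xhi2 eps x1 x2 :: real
  assumes "n \<ge> 2"
    and "1 \<le> xlo1" and "xlo1 < xhi1" and "1 \<le> xlo2" and "xlo2 < xhi2"
    and "eps \<ge> 1 / 2 ^ (2 ^ (n - 1))"
    and "x1 \<in> {xlo1..xhi1}" and "x2 \<in> {xlo2..xhi2}"
  shows "\<not> (\<exists>y. eps_follower_solutions n eps x1 x2 = {y})"
proof
  define z :: "nat \<Rightarrow> real" where "z i = 1/2^(2^(i-1))" for i
  define w :: "real \<Rightarrow> nat \<Rightarrow> real" where
    "w a i = (if i = 1 then 1/2 else if 2 \<le> i \<and> i \<le> n then max 0 (z i - eps)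
              else if i = n+1 then a else 0)" for a i
  have x1: "x1 \<ge> 1" "x2 \<ge> 1" using assms by auto
  have epos: "eps \<ge> 0" using assms(6) by (smt (verit) divide_nonneg_nonneg zero_le_power)
  have wn: "w a n = 0" for a
  proof -
    have "z n \<le> eps" using assms(6) by (simp add: z_def)
    then show ?thesis using assms(1) by (simp add: w_def)
  qed
  have feas: "eps_feasible n eps x1 x2 (w a)" if "0 \<le> a" "a \<le> x1" for a
    unfolding eps_feasible_def
  proof (intro conjI ballI allI impI)
    fix i assume "i \<notin> {1..n+2}" then show "w a i = 0" by (auto simp: w_def)
  next
    show "w a 1 + w a n = 1/2" using wn assms(1) by (simp add: w_def)
  next
    fix i assume "i \<in> {1..n}" then show "w a i \<ge> 0" by (auto simp: w_def)
  next
    show "0 \<le> w a (n+1)" "w a (n+1) \<le> x1" "-x2 \<le> w a (n+2)" "w a (n+2) \<le> x2"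
      using that x1 assms(1) by (auto simp: w_def)
  next
    fix i assume i: "i \<in> {1..n-1}"
    have sq: "(z i)^2 = z (i+1)" using i zsq[of i] by (simp add: z_def)
    have next_: "w a (i+1) \<ge> z (i+1) - eps" using i assms(1) by (auto simp: w_def)
    show "(w a i)^2 - w a (i+1) \<le> eps"
    proof (cases "i = 1")
      case True
      then have "z (i+1) = 1/4" by (simp add: z_def)
      then show ?thesis using True next_ by (simp add: w_def power2_eq_square)
    next
      case False
      have zp: "z i \<ge> 0" by (simp add: z_def)
      have "w a i = max 0 (z i - eps)" using False i by (auto simp: w_def)
      then have "0 \<le> w a i" "w a i \<le> z i" using epos zp by auto
      then have "(w a i)^2 \<le> (z i)^2" by (simp add: power_mono)
      then show ?thesis using sq next_ by simp
    qed
  qed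
  have obj: "ll_obj n x1 x2 (w a) = 1/2" for a
    using wn assms(1) by (simp add: ll_obj_def w_def)
  have bound: "ll_obj n x1 x2 v \<le> 1/2" if "eps_feasible n eps x1 x2 v" for v
  proof -
    have "v n \<ge> 0" "v 1 + v n = 1/2" "v (n+1) \<le> x1" "v (n+2) \<le> x2"
      using that assms(1) unfolding eps_feasible_def by auto
    moreover have "v n * (x1 + x2 - v (n+1) - v (n+2)) \<ge> 0"
      using calculation by simp
    ultimately show ?thesis unfolding ll_obj_def by linarith
  qed
  have mem: "w a \<in> eps_follower_solutions n eps x1 x2" if "0 \<le> a" "a \<le> x1" for a
    proof -
    have "\<forall>v. eps_feasible n eps x1 x2 v \<longrightarrow> ll_obj n x1 x2 v \<le> ll_obj n x1 x2 (w a)"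
      unfolding obj[of a] using bound by blast
    then show ?thesis using feas[OF that] unfolding eps_follower_solutions_def by simp
  qed
  have "w 0 \<noteq> w x1"
  proof
    assume "w 0 = w x1"
    then have "w 0 (n+1) = w x1 (n+1)" by simp
    then show False using x1 assms(1) by (simp add: w_def)
  qed
  moreover assume "\<exists>y. eps_follower_solutions n eps x1 x2 = {y}"
  ultimately show False using mem[of 0] mem[of x1] x1 by auto
qed

end
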